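(* Let $\bar X_n$ be the number of descendants of a node chosen uniformly at random from the inserted nodes $\{1,\dots,n\}$ of a random ordered increasing $k$-tree of size $n\ge1$. Then for $m\ge1$, \[ \mathbb{P}\{\bar X_n=m\}=\frac{\binom{m-1-\frac1{k+1}}{m-1}}{n\binom{n-\frac{k}{k+1}}{n}}\sum_{\ell=0}^{m-1}\frac{\binom{m-1}{\ell}(-1)^\ell}{(k+1)(\ell+1)+k}\left(\binom{n+\frac1{k+1}}{n}-\binom{n-\ell-2+\frac2{k+1}}{n}\right). \] As $n\to\infty$, $\bar X_n$ converges in distribution to a discrete random variable $\bar X$ with \[ \mathbb{P}\{\bar X=m\}=\frac{k}{(k+1)(m+\frac{k}{k+1})(m-\frac1{k+1})},\quad m\ge1. \]
   Context: Fix an integer $k\ge1$. An ordered increasing $k$-tree of size $n\ge0$ is built as follows. Start with the root-clique $K_0$: $k$ pairwise adjacent vertices labelled $0_1,\dots,0_k$ (the root nodes; each label $0_\ell$ has value $0$). For $j=1,\dots,n$ in turn, node $j$ is inserted by choosing a currently existing $k$-clique $K$ and attaching $j$ to it, i.e. adding edges from $j$ to all $k$ vertices of $K$; $j$ is then a child of $K$ and the vertices of $K$ are the parents of $j$. The $k$-cliques available for attachment are the root-clique and, for every previously inserted node $x$ attached to a clique $K'$, the $k$ cliques $\{x\}\cup(K'\setminus\{w\})$, $w\in K'$. The children of each $k$-clique are linearly ordered: if $K$ currently has $d^+(K)$ children, there are $d^+(K)+1$ positions at which the new child may be placed, and the choice of position is part of the structure. Thus there are $1+(k+1)(j-1)$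 ways to insert node $j$, and distinct sequences of choices give distinct trees. A random ordered increasing $k$-tree of size $n$ is one chosen uniformly among all of them; equivalently, it is produced by the process in which node $n$ is attached to the clique $K$ with probability $\frac{d^+(K)+1}{1+(k+1)(n-1)}$ (and a uniformly random position among the $d^+(K)+1$). A node $w$ is a descendant of $u$ if $w=u$ or some parent of $w$ is a descendant of $u$ (so $u$ counts as its own descendant). For real $x$ and integer $m\ge0$, $\binom{x}{m}=x(x-1)\cdots(x-m+1)/m!$, and $\binom{x}{m}=0$ for $m<0$. *)

theory Defs
  imports "HOL-Probability.Probability"
begin

text \<open>Vertices are integers: the root node 0_l (l = 1..k) is encoded as -l, inserted node j as j.  An ordered increasing k-tree of size n is encoded by the
  list of insertion choices: entry j-1 is the pair (K, p) where K is the clique node j was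
  attached to and p (0 \<le> p \<le> current number of children of K) the chosen position.\<close>

type_synonym oktree = "(int set \<times> nat) list"

definition root_clique :: "nat \<Rightarrow> int set" where
  "root_clique k = {- int k .. -1}"

definition parents :: "oktree \<Rightarrow> nat \<Rightarrow> int set" where
  "parents t x = fst (t ! (x - 1))"

definition kcliques :: "nat \<Rightarrow> oktree \<Rightarrow> int set set" where
  "kcliques k t = {root_clique k} \<union>
     {insert (int x) (parents t x - {w}) | x w. 1 \<le> x \<and> x \<le> length t \<and> w \<in> parents t x}"

definition outdeg :: "oktree \<Rightarrow> int set \<Rightarrow> nat" where
  "outdeg t K = card {x. 1 \<le> x \<and> x \<le> length t \<and> parents t x = K}"

fun oktrees :: "nat \<Rightarrow> nat \<Rightarrow> oktree set" where
  "oktrees k 0 = {[]}"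
| "oktrees k (Suc n) = {t @ [(K, p)] | t K p.
      t \<in> oktrees k n \<and> K \<in> kcliques k t \<and> p \<le> outdeg t K}"

inductive desc :: "oktree \<Rightarrow> int \<Rightarrow> int \<Rightarrow> bool" for t u where
  self: "desc t u u"
| step: "1 \<le> w \<Longrightarrow> w \<le> int (length t) \<Longrightarrow> v \<in> parents t (nat w) \<Longrightarrow> desc t u v
          \<Longrightarrow> desc t u w"

definition num_desc :: "oktree \<Rightarrow> nat \<Rightarrow> nat" where
  "num_desc t u = card {w. desc t (int u) w}"

definition Xbar :: "nat \<Rightarrow> nat \<Rightarrow> nat pmf" where
  "Xbar k n = map_pmf (\<lambda>(t, u). num_desc t u) (pmf_of_set (oktrees k n \<times> {1..n}))"

end

theory Submission
  imports Defs
begin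

definition gen :: "oktree \<Rightarrow> nat \<times> int \<Rightarrow> int set" where
  "gen t xw = insert (int (fst xw)) (parents t (fst xw) - {snd xw})"
definition gS :: "oktree \<Rightarrow> (nat \<times> int) set" where
  "gS t = (SIGMA x:{1..length t}. parents t x)"
lemma kcliques_gen: "kcliques k t = insert (root_clique k) (gen t ` gS t)"
proof -
  have "{insert (int x) (parents t x - {w}) | x w. 1 \<le> x \<and> x \<le> length t \<and> w \<in> parents t x} = gen t ` gS t"
    unfolding gen_def gS_def image_def by force
  thus ?thesis unfolding kcliques_def by simp
qed


lemma parents_append: "x \<le> length t \<Longrightarrow> 1 \<le> x \<Longrightarrow> parents (t@[e]) x = parents t x"
proof -
  assume "x \<le> length t" "1 \<le> x"
  hence "x - 1 < length t" by linarith
  thus ?thesis by (simp add: parents_def nth_append)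
qed

lemma parents_last: "parents (t@[e]) (Suc (length t)) = fst e"
  by (simp add: parents_def)

lemma gS_append: "gS (t@[e]) = gS t \<union> {Suc (length t)} \<times> fst e"
proof -
  have "{1..length (t@[e])} = {1..length t} \<union> {Suc (length t)}" by auto
  hence "gS (t@[e]) = (SIGMA x:{1..length t}. parents (t@[e]) x) \<union> (SIGMA x:{Suc (length t)}. parents (t@[e]) x)"
    unfolding gS_def by auto
  also have "(SIGMA x:{1..length t}. parents (t@[e]) x) = gS t"
    unfolding gS_def using parents_append by (intro Sigma_cong) auto
  moreover have "(SIGMA x:{Suc (length t)}. parents (t@[e]) x) = {Suc (length t)} \<times> fst e"
    using parents_last[of t e] by auto
  ultimately show ?thesis by simp
qed

lemma kcliques_append:
  "kcliques k (t@[(K,p)]) = kcliques k t \<union> (\<lambda>w. insert (int (Suc (length t))) (K - {w})) ` K"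
proof -
  have 1: "gen (t@[(K,p)]) ` gS t = gen t ` gS t"
    by (intro image_cong) (auto simp: gen_def gS_def parents_append)
  have 2: "gen (t@[(K,p)]) ` ({Suc (length t)} \<times> K) = (\<lambda>w. insert (int (Suc (length t))) (K - {w})) ` K"
    by (auto simp: gen_def parents_last image_def)
  show ?thesis unfolding kcliques_gen gS_append image_Un 1 using 2 by auto
qed


definition kinv :: "nat \<Rightarrow> oktree \<Rightarrow> bool" where
 "kinv k t \<longleftrightarrow> (\<forall>K\<in>kcliques k t. finite K \<and> card K = k \<and> (\<forall>v\<in>K. v \<le> int (length t))) \<and>
    (\<forall>x. 1 \<le> x \<and> x \<le> length t \<longrightarrow> parents t x \<in> kcliques k t \<and> (\<forall>v\<in>parents t x. v < int x))"

lemma card_root: "card (root_clique k) = k"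
  by (simp add: root_clique_def)

lemma inv_Nil: "kinv k []"
proof -
  have "kcliques k [] = {root_clique k}" unfolding kcliques_def by simp
  thus ?thesis unfolding kinv_def by (auto simp: card_root root_clique_def)
qed

lemma inv_append:
  assumes I: "kinv k t" and K: "K \<in> kcliques k t"
  shows "kinv k (t@[(K,p)])"
proof -
  have "finite K \<and> card K = k \<and> (\<forall>v\<in>K. v \<le> int (length t))" using I K unfolding kinv_def by blast
  hence KK: "finite K" "card K = k" "\<forall>v\<in>K. v \<le> int (length t)" by auto
  have P1: "\<forall>K'\<in>kcliques k (t@[(K,p)]). finite K' \<and> card K' = k \<and> (\<forall>v\<in>K'. v \<le> int (length (t@[(K,p)])))"
  proof
    fix K' assume "K' \<in> kcliques k (t@[(K,p)])"
    then consider "K' \<in> kcliques k t" | w where "w \<in> K" "K' = insert (int (Suc (length t))) (K - {w})"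
      unfolding kcliques_append by auto
    then show "finite K' \<and> card K' = k \<and> (\<forall>v\<in>K'. v \<le> int (length (t@[(K,p)])))"
    proof cases
      case 1
      hence "finite K' \<and> card K' = k \<and> (\<forall>v\<in>K'. v \<le> int (length t))" using I unfolding kinv_def by blast
      moreover have "int (length t) \<le> int (length (t@[(K,p)]))" by simp
      ultimately show ?thesis by (meson order_trans)
    next
      case (2 w)
      have "int (Suc (length t)) \<notin> K - {w}"
      proof
        assume "int (Suc (length t)) \<in> K - {w}"
        hence "int (Suc (length t)) \<le> int (length t)" using KK(3) by blast
        thus False by simp
      qed
      hence "card K' = card (K - {w}) + 1" using 2 KK by simp
      also have "\<dots> = k" using 2 KK
      proof -
        have "card K > 0" using 2 KK card_gt_0_iff by blast
        thus ?thesis using 2 KK by (simp add: card_Diff_singleton)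
      qed
      finally have "card K' = k" .
      moreover have "finite K'" using 2 KK by simp
      moreover have "\<forall>v\<in>K'. v \<le> int (length (t@[(K,p)]))"
      proof
        fix v assume "v \<in> K'"
        hence "v = int (Suc (length t)) \<or> v \<in> K" using 2 by blast
        thus "v \<le> int (length (t@[(K,p)]))" using KK by auto
      qed
      ultimately show ?thesis by blast
    qed
  qed
  have P2: "\<forall>x. 1 \<le> x \<and> x \<le> length (t@[(K,p)]) \<longrightarrow> parents (t@[(K,p)]) x \<in> kcliques k (t@[(K,p)]) \<and> (\<forall>v\<in>parents (t@[(K,p)]) x. v < int x)"
  proof (intro allI impI)
    fix x assume x: "1 \<le> x \<and> x \<le> length (t@[(K,p)])"
    show "parents (t@[(K,p)]) x \<in> kcliques k (t@[(K,p)]) \<and> (\<forall>v\<in>parents (t@[(K,p)]) x. v < int x)"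
    proof (cases "x = Suc (length t)")
      case True
      have "parents (t@[(K,p)]) x = K" using True parents_last[of t "(K,p)"] by simp
      moreover have "\<forall>v\<in>K. v < int x" using KK True by auto
      ultimately show ?thesis using K unfolding kcliques_append by simp
    next
      case False hence "x \<le> length t" using x by auto
      have "parents (t@[(K,p)]) x = parents t x" using parents_append[of x t "(K,p)"] x \<open>x \<le> length t\<close> by simp
      moreover have "parents t x \<in> kcliques k t" "\<forall>v\<in>parents t x. v < int x"
        using I x \<open>x \<le> length t\<close> unfolding kinv_def by auto
      ultimately show ?thesis unfolding kcliques_append by simp
    qed
  qed
  show ?thesis unfolding kinv_def using P1 P2 by blast
qed

lemma oktrees_inv: "t \<in> oktrees k n \<Longrightarrow> kinv k t \<and> length t = n"
proof (induction n arbitrary: t)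
  case 0 thus ?case by (simp add: inv_Nil)
next
  case (Suc n)
  then obtain t' K p where "t = t' @ [(K,p)]" "t' \<in> oktrees k n" "K \<in> kcliques k t'" by auto
  thus ?case using Suc.IH inv_append by auto
qed

lemma inv_parents:
  assumes "kinv k t" "1 \<le> x" "x \<le> length t"
  shows "parents t x \<in> kcliques k t" "finite (parents t x)" "card (parents t x) = k"
        "\<And>v. v \<in> parents t x \<Longrightarrow> v < int x"
  using assms unfolding kinv_def by blast+

lemma finite_gS: "kinv k t \<Longrightarrow> finite (gS t)"
  unfolding gS_def using inv_parents by (intro finite_SigmaI) auto

lemma card_gS_sub: "kinv k t \<Longrightarrow> A \<subseteq> {1..length t} \<Longrightarrow> card (SIGMA x:A. parents t x) = k * card A"
proof -
  assume I: "kinv k t" and A: "A \<subseteq> {1..length t}"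
  have "finite A" using A finite_subset by blast
  hence "card (SIGMA x:A. parents t x) = (\<Sum>x\<in>A. card (parents t x))"
    using inv_parents[OF I] A by (intro card_SigmaI) auto
  also have "\<dots> = (\<Sum>x\<in>A. k)" using inv_parents[OF I] A by (intro sum.cong) auto
  finally show ?thesis by simp
qed

lemma inj_gen: assumes I: "kinv k t" shows "inj_on (gen t) (gS t)"
proof
  fix p q assume p: "p \<in> gS t" and q: "q \<in> gS t" and eq: "gen t p = gen t q"
  obtain x w where pp: "p = (x,w)" by force
  obtain y z where qq: "q = (y,z)" by force
  have x: "1 \<le> x" "x \<le> length t" "w \<in> parents t x" using p pp unfolding gS_def by auto
  have y: "1 \<le> y" "y \<le> length t" "z \<in> parents t y" using q qq unfolding gS_def by auto
  have e: "insert (int x) (parents t x - {w}) = insert (int y) (parents t y - {z})"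
    using eq pp qq unfolding gen_def by simp
  have "int x \<le> int y"
  proof -
    have "int x \<in> insert (int y) (parents t y - {z})" using e by blast
    thus ?thesis using inv_parents(4)[OF I y(1,2)] by force
  qed
  moreover have "int y \<le> int x"
  proof -
    have "int y \<in> insert (int x) (parents t x - {w})" using e by blast
    thus ?thesis using inv_parents(4)[OF I x(1,2)] by force
  qed
  ultimately have xy: "x = y" by simp
  have nx: "int x \<notin> parents t x" using inv_parents(4)[OF I x(1,2)] by force
  have "parents t x - {w} = parents t x - {z}"
  proof -
    have "parents t x - {w} = insert (int x) (parents t x - {w}) - {int x}" using nx by auto
    also have "\<dots> = insert (int x) (parents t x - {z}) - {int x}" using e xy by simp
    also have "\<dots> = parents t x - {z}" using nx by auto
    finally show ?thesis .
  qed
  hence "w = z" using x(3) y(3) xy by blast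
  thus "p = q" using pp qq xy by simp
qed

lemma root_notin_gen: "p \<in> gS t \<Longrightarrow> root_clique k \<noteq> gen t p"
proof
  assume "p \<in> gS t" "root_clique k = gen t p"
  hence "int (fst p) \<in> root_clique k" "1 \<le> fst p" unfolding gen_def gS_def by auto
  thus False unfolding root_clique_def by auto
qed

lemma finite_kcliques: "kinv k t \<Longrightarrow> finite (kcliques k t)"
  unfolding kcliques_gen using finite_gS by blast

lemma card_kcliques: assumes I: "kinv k t" shows "card (kcliques k t) = 1 + k * length t"
proof -
  have "root_clique k \<notin> gen t ` gS t" using root_notin_gen by blast
  hence "card (kcliques k t) = 1 + card (gen t ` gS t)"
    unfolding kcliques_gen using finite_gS[OF I] by simp
  also have "card (gen t ` gS t) = card (gS t)" using inj_gen[OF I] by (rule card_image)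
  also have "card (gS t) = k * length t" unfolding gS_def using card_gS_sub[OF I, of "{1..length t}"] by simp
  finally show ?thesis .
qed


lemma desc_ge:
  assumes I: "kinv k t" and d: "desc t u w"
  shows "u \<le> w \<and> (w = u \<or> (1 \<le> w \<and> w \<le> int (length t)))"
  using d
proof (induction rule: desc.induct)
  case self thus ?case by simp
next
  case (step w v)
  have "1 \<le> nat w" "nat w \<le> length t" using step.hyps by auto
  hence "v < int (nat w)" using inv_parents(4)[OF I] step.hyps(3) by blast
  thus ?case using step by simp
qed

lemma desc_parent_lt:
  assumes I: "kinv k t" and u: "1 \<le> u" "u \<le> length t" and v: "v \<in> parents t u"
  shows "\<not> desc t (int u) v"
proof
  assume "desc t (int u) v"
  hence "int u \<le> v" using desc_ge[OF I] by blast
  moreover have "v < int u" using inv_parents(4)[OF I u v] .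
  ultimately show False by simp
qed

lemma desc_append_imp:
  assumes I: "kinv k t" and d: "desc (t@[e]) u w"
  shows "desc t u w \<or> (w = int (Suc (length t)) \<and> (\<exists>v\<in>fst e. desc t u v))"
  using d
proof (induction rule: desc.induct)
  case self thus ?case by (simp add: desc.self)
next
  case (step w v)
  show ?case
  proof (cases "w = int (Suc (length t))")
    case True
    hence "nat w = Suc (length t)" by simp
    hence "v \<in> fst e" using step.hyps(3) parents_last[of t e] by simp
    thus ?thesis using step.IH True by blast
  next
    case False
    hence wn: "nat w \<le> length t" "1 \<le> nat w" using step.hyps(1,2) by auto
    hence pv: "v \<in> parents t (nat w)" using step.hyps(3) parents_append[of "nat w" t e] by simp
    hence "v < w" using inv_parents(4)[OF I wn(2,1)] step.hyps(1) by simp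
    hence "v \<noteq> int (Suc (length t))" using wn step.hyps(1) by simp
    hence "desc t u v" using step.IH by blast
    hence "desc t u w" using desc.step[OF step.hyps(1) _ pv] wn step.hyps(1) by simp
    thus ?thesis by blast
  qed
qed

lemma desc_append_mono:
  assumes d: "desc t u w" shows "desc (t@[e]) u w"
  using d
proof (induction rule: desc.induct)
  case self thus ?case by (rule desc.self)
next
  case (step w v)
  have wn: "nat w \<le> length t" "1 \<le> nat w" using step.hyps(1,2) by auto
  hence "v \<in> parents (t@[e]) (nat w)" using step.hyps(3) parents_append[of "nat w" t e] by simp
  moreover have "w \<le> int (length (t@[e]))" using step.hyps(2) by simp
  ultimately show ?case using desc.step[OF step.hyps(1)] step.IH by blast
qed

lemma desc_append:
  assumes I: "kinv k t"
  shows "desc (t@[e]) u w \<longleftrightarrow> desc t u w \<or> (w = int (Suc (length t)) \<and> (\<exists>v\<in>fst e. desc t u v))"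
proof
  assume "desc (t@[e]) u w" thus "desc t u w \<or> (w = int (Suc (length t)) \<and> (\<exists>v\<in>fst e. desc t u v))"
    using desc_append_imp[OF I] by blast
next
  assume "desc t u w \<or> (w = int (Suc (length t)) \<and> (\<exists>v\<in>fst e. desc t u v))"
  thus "desc (t@[e]) u w"
  proof
    assume "desc t u w" thus ?thesis by (rule desc_append_mono)
  next
    assume a: "w = int (Suc (length t)) \<and> (\<exists>v\<in>fst e. desc t u v)"
    then obtain v where v: "v \<in> fst e" "desc t u v" by blast
    have "nat w = Suc (length t)" using a by simp
    hence "v \<in> parents (t@[e]) (nat w)" using v parents_last[of t e] by simp
    moreover have "desc (t@[e]) u v" using v desc_append_mono by blast
    ultimately show ?thesis using desc.step[of w "t@[e]" v u] a by simp
  qed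
qed

definition Dset :: "oktree \<Rightarrow> nat \<Rightarrow> int set" where
  "Dset t u = {w. desc t (int u) w}"

lemma Dset_sub:
  assumes I: "kinv k t" and u: "1 \<le> u" "u \<le> length t"
  shows "Dset t u \<subseteq> {int u .. int (length t)}" "finite (Dset t u)" "int u \<in> Dset t u"
proof -
  show S: "Dset t u \<subseteq> {int u .. int (length t)}"
  proof
    fix w assume "w \<in> Dset t u"
    hence "desc t (int u) w" unfolding Dset_def by simp
    thus "w \<in> {int u .. int (length t)}" using desc_ge[OF I] u by fastforce
  qed
  show "finite (Dset t u)" using S finite_subset by blast
  show "int u \<in> Dset t u" unfolding Dset_def by (simp add: desc.self)
qed

lemma num_desc_Dset: "num_desc t u = card (Dset t u)"
  unfolding num_desc_def Dset_def by simp

lemma num_desc_append: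
  assumes I: "kinv k t" and u: "1 \<le> u" "u \<le> length t"
  shows "num_desc (t@[e]) u = num_desc t u + (if fst e \<inter> Dset t u \<noteq> {} then 1 else 0)"
proof -
  have eq: "Dset (t@[e]) u = Dset t u \<union> (if fst e \<inter> Dset t u \<noteq> {} then {int (Suc (length t))} else {})"
    unfolding Dset_def using desc_append[OF I, of e "int u"] by auto
  have "int (Suc (length t)) \<notin> Dset t u" using Dset_sub(1)[OF I u] by auto
  thus ?thesis unfolding num_desc_Dset eq using Dset_sub(2)[OF I u] by auto
qed

lemma num_desc_last:
  assumes I: "kinv k t'" and t': "length t' = Suc n"
  shows "num_desc t' (Suc n) = 1"
proof -
  have "Dset t' (Suc n) = {int (Suc n)}"
  proof -
    have "Dset t' (Suc n) \<subseteq> {int (Suc n)}" using Dset_sub(1)[OF I, of "Suc n"] t' by auto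
    moreover have "int (Suc n) \<in> Dset t' (Suc n)" unfolding Dset_def by (simp add: desc.self)
    ultimately show ?thesis by blast
  qed
  thus ?thesis unfolding num_desc_Dset by simp
qed


definition choices :: "nat \<Rightarrow> oktree \<Rightarrow> (int set \<times> nat) set" where
  "choices k t = (SIGMA K:kcliques k t. {..outdeg t K})"

lemma outdeg_sum:
  assumes S: "finite S"
  shows "(\<Sum>K\<in>S. outdeg t K) = card {x\<in>{1..length t}. parents t x \<in> S}"
proof -
  let ?X = "{x\<in>{1..length t}. parents t x \<in> S}"
  have "\<And>K. K \<in> S \<Longrightarrow> outdeg t K = sum (\<lambda>_. 1::nat) {x\<in>?X. parents t x = K}"
  proof -
    fix K assume K: "K \<in> S"
    have "{x\<in>?X. parents t x = K} = {x. 1 \<le> x \<and> x \<le> length t \<and> parents t x = K}"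
      using K by auto
    thus "outdeg t K = sum (\<lambda>_. 1::nat) {x\<in>?X. parents t x = K}"
      unfolding outdeg_def by simp
  qed
  hence "(\<Sum>K\<in>S. outdeg t K) = (\<Sum>K\<in>S. sum (\<lambda>_. 1::nat) {x\<in>?X. parents t x = K})"
    by (rule sum.cong[OF refl])
  also have "\<dots> = sum (\<lambda>_. 1::nat) ?X"
  proof (rule sum.group)
    show "finite ?X" by simp
    show "finite S" by (rule S)
    show "parents t ` ?X \<subseteq> S" by blast
  qed
  finally show ?thesis by simp
qed

lemma card_choices_P:
  assumes I: "kinv k t"
  shows "card {c\<in>choices k t. P (fst c)} = card {K\<in>kcliques k t. P K} + card {x\<in>{1..length t}. parents t x \<in> {K\<in>kcliques k t. P K}}"
proof -
  have fin: "finite {K\<in>kcliques k t. P K}" using finite_kcliques[OF I] by simp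
  have "{c\<in>choices k t. P (fst c)} = (SIGMA K:{K\<in>kcliques k t. P K}. {..outdeg t K})"
    unfolding choices_def by auto
  hence "card {c\<in>choices k t. P (fst c)} = (\<Sum>K\<in>{K\<in>kcliques k t. P K}. card {..outdeg t K})"
    using fin by (simp add: card_SigmaI)
  also have "\<dots> = (\<Sum>K\<in>{K\<in>kcliques k t. P K}. 1 + outdeg t K)" by simp
  also have "\<dots> = card {K\<in>kcliques k t. P K} + (\<Sum>K\<in>{K\<in>kcliques k t. P K}. outdeg t K)"
    by (subst sum.distrib) simp
  finally show ?thesis using outdeg_sum[OF fin] by simp
qed

lemma card_choices:
  assumes I: "kinv k t"
  shows "card (choices k t) = 1 + (k + 1) * length t"
proof -
  have "card {c\<in>choices k t. True} = card {K\<in>kcliques k t. True} + card {x\<in>{1..length t}. parents t x \<in> {K\<in>kcliques k t. True}}"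
    by (rule card_choices_P[OF I])
  moreover have "{x\<in>{1..length t}. parents t x \<in> {K\<in>kcliques k t. True}} = {1..length t}"
    using inv_parents(1)[OF I] by auto
  ultimately show ?thesis using card_kcliques[OF I] by simp
qed

lemma finite_choices: "kinv k t \<Longrightarrow> finite (choices k t)"
  unfolding choices_def using finite_kcliques by (intro finite_SigmaI) auto

lemma inside_eq:
  assumes I: "kinv k t" and u: "1 \<le> u" "u \<le> length t"
  shows "{K\<in>kcliques k t. K \<inter> Dset t u \<noteq> {}} = gen t ` (SIGMA x:{x\<in>{1..length t}. int x \<in> Dset t u}. parents t x)"
proof (rule set_eqI, rule iffI)
  fix K assume K: "K \<in> {K\<in>kcliques k t. K \<inter> Dset t u \<noteq> {}}"
  have "K \<noteq> root_clique k"
  proof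
    assume "K = root_clique k"
    moreover obtain y where "y \<in> K" "y \<in> Dset t u" using K by blast
    ultimately have "y \<le> -1" "int u \<le> y" using Dset_sub(1)[OF I u] unfolding root_clique_def by auto
    thus False using u by simp
  qed
  then obtain p where p: "p \<in> gS t" "K = gen t p" using K unfolding kcliques_gen by blast
  obtain x w where xw: "p = (x,w)" by force
  have x: "1 \<le> x" "x \<le> length t" "w \<in> parents t x" using p xw unfolding gS_def by auto
  obtain y where y: "y \<in> K" "y \<in> Dset t u" using K by blast
  have "int x \<in> Dset t u"
  proof (cases "y = int x")
    case True thus ?thesis using y by simp
  next
    case False
    hence "y \<in> parents t x" using y p xw unfolding gen_def by auto
    hence "desc t (int u) (int x)" using desc.step[of "int x" t y "int u"] x y unfolding Dset_def by simp
    thus ?thesis unfolding Dset_def by simp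
  qed
  thus "K \<in> gen t ` (SIGMA x:{x\<in>{1..length t}. int x \<in> Dset t u}. parents t x)"
    using p xw x by auto
next
  fix K assume "K \<in> gen t ` (SIGMA x:{x\<in>{1..length t}. int x \<in> Dset t u}. parents t x)"
  then obtain x w where xw: "K = gen t (x,w)" "1 \<le> x" "x \<le> length t" "int x \<in> Dset t u" "w \<in> parents t x"
    by auto
  have "(x,w) \<in> gS t" using xw unfolding gS_def by auto
  hence "K \<in> kcliques k t" unfolding kcliques_gen using xw by blast
  moreover have "int x \<in> K" using xw unfolding gen_def by simp
  ultimately show "K \<in> {K\<in>kcliques k t. K \<inter> Dset t u \<noteq> {}}" using xw by blast
qed

lemma Dset_nat:
  assumes I: "kinv k t" and u: "1 \<le> u" "u \<le> length t"
  shows "card {x\<in>{1..length t}. int x \<in> Dset t u} = card (Dset t u)"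
proof -
  have "int ` {x\<in>{1..length t}. int x \<in> Dset t u} = Dset t u"
  proof
    show "int ` {x\<in>{1..length t}. int x \<in> Dset t u} \<subseteq> Dset t u" by auto
    show "Dset t u \<subseteq> int ` {x\<in>{1..length t}. int x \<in> Dset t u}"
    proof
      fix w assume w: "w \<in> Dset t u"
      hence "w \<in> {int u .. int (length t)}" using Dset_sub(1)[OF I u] by blast
      hence "nat w \<in> {1..length t}" "w = int (nat w)" using u by auto
      thus "w \<in> int ` {x\<in>{1..length t}. int x \<in> Dset t u}" using w by force
    qed
  qed
  moreover have "inj_on int {x\<in>{1..length t}. int x \<in> Dset t u}" by (simp add: inj_on_def)
  ultimately show ?thesis using card_image by metis
qed

lemma card_inside:
  assumes I: "kinv k t" and u: "1 \<le> u" "u \<le> length t"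
  shows "card {K\<in>kcliques k t. K \<inter> Dset t u \<noteq> {}} = k * card (Dset t u)"
proof -
  let ?A = "{x\<in>{1..length t}. int x \<in> Dset t u}"
  have sub: "(SIGMA x:?A. parents t x) \<subseteq> gS t" unfolding gS_def by auto
  have "card (gen t ` (SIGMA x:?A. parents t x)) = card (SIGMA x:?A. parents t x)"
    using inj_on_subset[OF inj_gen[OF I] sub] by (rule card_image)
  also have "\<dots> = k * card ?A" by (rule card_gS_sub[OF I]) auto
  finally show ?thesis using inside_eq[OF I u] Dset_nat[OF I u] by simp
qed

lemma parents_inside:
  assumes I: "kinv k t" and u: "1 \<le> u" "u \<le> length t"
  shows "{x\<in>{1..length t}. parents t x \<in> {K\<in>kcliques k t. K \<inter> Dset t u \<noteq> {}}} = {x\<in>{1..length t}. int x \<in> Dset t u} - {u}"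
proof (rule set_eqI, rule iffI)
  fix x assume "x \<in> {x\<in>{1..length t}. parents t x \<in> {K\<in>kcliques k t. K \<inter> Dset t u \<noteq> {}}}"
  hence x0: "1 \<le> x" "x \<le> length t" "parents t x \<inter> Dset t u \<noteq> {}" by auto
  then obtain v where x: "1 \<le> x" "x \<le> length t" "v \<in> parents t x" "v \<in> Dset t u" by blast
  have "desc t (int u) (int x)" using desc.step[of "int x" t v "int u"] x unfolding Dset_def by simp
  moreover have "x \<noteq> u"
  proof
    assume "x = u"
    thus False using desc_parent_lt[OF I u, of v] x unfolding Dset_def by simp
  qed
  ultimately show "x \<in> {x\<in>{1..length t}. int x \<in> Dset t u} - {u}" using x unfolding Dset_def by simp
next
  fix x assume x: "x \<in> {x\<in>{1..length t}. int x \<in> Dset t u} - {u}"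
  hence d: "desc t (int u) (int x)" "int x \<noteq> int u" "1 \<le> x" "x \<le> length t" unfolding Dset_def by auto
  from d(1,2) obtain v where "v \<in> parents t x" "desc t (int u) v"
    by (cases rule: desc.cases) auto
  moreover have "parents t x \<in> kcliques k t" using inv_parents(1)[OF I d(3,4)] .
  ultimately show "x \<in> {x\<in>{1..length t}. parents t x \<in> {K\<in>kcliques k t. K \<inter> Dset t u \<noteq> {}}}"
    using d unfolding Dset_def by auto
qed

lemma card_inside_choices:
  assumes I: "kinv k t" and u: "1 \<le> u" "u \<le> length t"
  shows "card {c\<in>choices k t. fst c \<inter> Dset t u \<noteq> {}} + 1 = (k + 1) * num_desc t u"
proof -
  let ?A = "{x\<in>{1..length t}. int x \<in> Dset t u}"
  have uA: "u \<in> ?A" using u Dset_sub(3)[OF I u] by simp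
  have "card (?A - {u}) = card ?A - 1" using uA by (simp add: card_Diff_singleton)
  hence c1: "card (?A - {u}) = card (Dset t u) - 1" using Dset_nat[OF I u] by simp
  have pos: "card (Dset t u) \<ge> 1" using Dset_sub(2,3)[OF I u] card_gt_0_iff
    by (metis One_nat_def Suc_leI empty_iff)
  have "card {c\<in>choices k t. fst c \<inter> Dset t u \<noteq> {}} = k * card (Dset t u) + (card (Dset t u) - 1)"
    using card_choices_P[OF I, of "\<lambda>K. K \<inter> Dset t u \<noteq> {}"] card_inside[OF I u] parents_inside[OF I u] c1
    by simp
  thus ?thesis using pos unfolding num_desc_Dset by simp
qed


lemma oktrees_Suc_img:
  "oktrees k (Suc n) = (\<lambda>(t,c). t@[c]) ` (SIGMA t:oktrees k n. choices k t)"
  unfolding choices_def by (auto simp: image_def)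

lemma finite_oktrees: "finite (oktrees k n)"
proof (induction n)
  case 0 thus ?case by simp
next
  case (Suc n)
  have "finite (SIGMA t:oktrees k n. choices k t)"
    using Suc finite_choices oktrees_inv by (intro finite_SigmaI) auto
  thus ?case unfolding oktrees_Suc_img by simp
qed

lemma inj_app: "inj_on (\<lambda>(t,c). t@[c]) A"
  by (auto simp: inj_on_def)

lemma card_oktrees_filter:
  "card {t'\<in>oktrees k (Suc n). P t'} = (\<Sum>t\<in>oktrees k n. card {c\<in>choices k t. P (t@[c])})"
proof -
  have "{t'\<in>oktrees k (Suc n). P t'} = (\<lambda>(t,c). t@[c]) ` (SIGMA t:oktrees k n. {c\<in>choices k t. P (t@[c])})"
    unfolding oktrees_Suc_img by auto
  hence "card {t'\<in>oktrees k (Suc n). P t'} = card (SIGMA t:oktrees k n. {c\<in>choices k t. P (t@[c])})"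
    using card_image[OF inj_app] by simp
  also have "\<dots> = (\<Sum>t\<in>oktrees k n. card {c\<in>choices k t. P (t@[c])})"
    using finite_oktrees finite_choices oktrees_inv by (intro card_SigmaI) auto
  finally show ?thesis .
qed

lemma card_oktrees_Suc: "card (oktrees k (Suc n)) = card (oktrees k n) * (1 + (k+1) * n)"
proof -
  have "card {t'\<in>oktrees k (Suc n). True} = (\<Sum>t\<in>oktrees k n. card {c\<in>choices k t. True})"
    by (rule card_oktrees_filter)
  also have "\<dots> = (\<Sum>t\<in>oktrees k n. 1 + (k+1) * n)"
    using card_choices oktrees_inv by (intro sum.cong) auto
  finally show ?thesis by simp
qed

lemma card_filter_compl:
  "finite A \<Longrightarrow> real (card {c\<in>A. \<not> P c}) = real (card A) - real (card {c\<in>A. P c})"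
proof -
  assume A: "finite A"
  have "{c\<in>A. \<not> P c} = A - {c\<in>A. P c}" by auto
  moreover have "card (A - {c\<in>A. P c}) = card A - card {c\<in>A. P c}" using A by (intro card_Diff_subset) auto
  moreover have "card {c\<in>A. P c} \<le> card A" using A by (intro card_mono) auto
  ultimately show ?thesis by simp
qed

lemma per_tree:
  assumes t: "t \<in> oktrees k n" and u: "1 \<le> u" "u \<le> n"
  shows "real (card {c\<in>choices k t. num_desc (t@[c]) u = m}) =
     (if num_desc t u = m then (1 + (real k+1) * real n) - ((real k + 1) * real m - 1) else 0)
   + (if num_desc t u + 1 = m then (real k + 1) * real (num_desc t u) - 1 else 0)"
proof -
  have I: "kinv k t" and len: "length t = n" using oktrees_inv[OF t] by auto
  have u': "1 \<le> u" "u \<le> length t" using u len by auto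
  let ?d = "num_desc t u"
  let ?P = "\<lambda>c. fst c \<inter> Dset t u \<noteq> {}"
  have nd: "\<And>c. num_desc (t@[c]) u = ?d + (if ?P c then 1 else 0)"
    using num_desc_append[OF I u'] by simp
  have ins: "real (card {c\<in>choices k t. ?P c}) = (real k + 1) * real ?d - 1"
  proof -
    have "real (card {c\<in>choices k t. ?P c} + 1) = real ((k + 1) * ?d)"
      using card_inside_choices[OF I u'] by presburger
    hence "real (card {c\<in>choices k t. ?P c}) + 1 = (real k + 1) * real ?d" by (simp add: algebra_simps)
    thus ?thesis by linarith
  qed
  have tot: "real (card (choices k t)) = 1 + (real k+1) * real n"
    using card_choices[OF I] len by (simp add: algebra_simps)
  consider "?d = m" | "?d + 1 = m" | "?d \<noteq> m" "?d + 1 \<noteq> m" by blast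
  thus ?thesis
  proof cases
    case 1
    hence "{c\<in>choices k t. num_desc (t@[c]) u = m} = {c\<in>choices k t. \<not> ?P c}" using nd by auto
    hence "real (card {c\<in>choices k t. num_desc (t@[c]) u = m}) = real (card (choices k t)) - real (card {c\<in>choices k t. ?P c})"
      using card_filter_compl[OF finite_choices[OF I]] by simp
    thus ?thesis using 1 ins tot by simp
  next
    case 2
    hence "{c\<in>choices k t. num_desc (t@[c]) u = m} = {c\<in>choices k t. ?P c}" using nd by auto
    thus ?thesis using 2 ins by simp
  next
    case 3
    hence E: "{c\<in>choices k t. num_desc (t@[c]) u = m} = {}" using nd by auto
    show ?thesis unfolding E using 3 by simp
  qed
qed

definition NN :: "nat \<Rightarrow> nat \<Rightarrow> nat \<Rightarrow> nat" where
  "NN k n m = (\<Sum>u\<in>{1..n}. card {t\<in>oktrees k n. num_desc t u = m})"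

lemma num_desc_pos: "t \<in> oktrees k n \<Longrightarrow> 1 \<le> u \<Longrightarrow> u \<le> n \<Longrightarrow> num_desc t u \<ge> 1"
proof -
  assume t: "t \<in> oktrees k n" and u: "1 \<le> u" "u \<le> n"
  have I: "kinv k t" "length t = n" using oktrees_inv[OF t] by auto
  have "finite (Dset t u)" "int u \<in> Dset t u" using Dset_sub(2,3)[OF I(1)] u I(2) by auto
  hence "card (Dset t u) > 0" using card_gt_0_iff by blast
  thus ?thesis unfolding num_desc_Dset by simp
qed

lemma NN_0: "NN k n 0 = 0"
  unfolding NN_def using num_desc_pos
  by (intro sum.neutral ballI) (fastforce simp: card_eq_0_iff)

lemma sum_if_card: "finite A \<Longrightarrow> (\<Sum>t\<in>A. if P t then (c::real) else 0) = c * real (card {t\<in>A. P t})"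
  by (simp add: sum.inter_filter[symmetric])

lemma NN_rec:
  assumes m: "m \<ge> 1"
  shows "real (NN k (Suc n) m) =
     real (NN k n m) * ((1 + (real k+1) * real n) - ((real k + 1) * real m - 1))
   + real (NN k n (m - 1)) * ((real k + 1) * real (m - 1) - 1)
   + (if m = 1 then real (card (oktrees k n)) * (1 + (real k+1) * real n) else 0)"
proof -
  let ?W = "1 + (real k+1) * real n"
  let ?a = "(real k + 1) * real m - 1"
  let ?b = "(real k + 1) * real (m - 1) - 1"
  have last: "real (card {t\<in>oktrees k (Suc n). num_desc t (Suc n) = m}) = (if m = 1 then real (card (oktrees k n)) * ?W else 0)"
  proof -
    have "\<And>t. t \<in> oktrees k (Suc n) \<Longrightarrow> num_desc t (Suc n) = 1"
      using oktrees_inv num_desc_last by blast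
    hence "{t\<in>oktrees k (Suc n). num_desc t (Suc n) = m} = (if m = 1 then oktrees k (Suc n) else {})" by auto
    moreover have "real (card (oktrees k (Suc n))) = real (card (oktrees k n)) * ?W"
      using card_oktrees_Suc[of k n] by (simp del: oktrees.simps add: algebra_simps)
    ultimately show ?thesis by (simp del: oktrees.simps)
  qed
  have inner: "real (card {t\<in>oktrees k (Suc n). num_desc t u = m}) =
      (?W - ?a) * real (card {t\<in>oktrees k n. num_desc t u = m}) + ?b * real (card {t\<in>oktrees k n. num_desc t u = m - 1})"
    if u: "u \<in> {1..n}" for u
  proof -
    have "real (card {t\<in>oktrees k (Suc n). num_desc t u = m}) = (\<Sum>t\<in>oktrees k n. real (card {c\<in>choices k t. num_desc (t@[c]) u = m}))"
      using card_oktrees_filter[of k n "\<lambda>t'. num_desc t' u = m"] by (simp del: oktrees.simps)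
    also have "\<dots> = (\<Sum>t\<in>oktrees k n. (if num_desc t u = m then ?W - ?a else 0) + (if num_desc t u = m - 1 then ?b else 0))"
    proof (rule sum.cong[OF refl])
      fix t assume t: "t \<in> oktrees k n"
      have "(num_desc t u + 1 = m) = (num_desc t u = m - 1)" using m by auto
      moreover have "num_desc t u = m - 1 \<Longrightarrow> (real k + 1) * real (num_desc t u) - 1 = ?b" by simp
      ultimately show "real (card {c\<in>choices k t. num_desc (t@[c]) u = m}) = (if num_desc t u = m then ?W - ?a else 0) + (if num_desc t u = m - 1 then ?b else 0)"
        using per_tree[OF t, of u m] u by auto
    qed
    also have "\<dots> = (?W - ?a) * real (card {t\<in>oktrees k n. num_desc t u = m}) + ?b * real (card {t\<in>oktrees k n. num_desc t u = m - 1})"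
      by (simp add: sum.distrib sum_if_card[OF finite_oktrees])
    finally show ?thesis .
  qed
  have "real (NN k (Suc n) m) = (\<Sum>u\<in>{1..n}. real (card {t\<in>oktrees k (Suc n). num_desc t u = m})) + real (card {t\<in>oktrees k (Suc n). num_desc t (Suc n) = m})"
    unfolding NN_def by (simp del: oktrees.simps)
  also have "(\<Sum>u\<in>{1..n}. real (card {t\<in>oktrees k (Suc n). num_desc t u = m})) =
     (\<Sum>u\<in>{1..n}. (?W - ?a) * real (card {t\<in>oktrees k n. num_desc t u = m}) + ?b * real (card {t\<in>oktrees k n. num_desc t u = m - 1}))"
    using inner by (rule sum.cong[OF refl])
  also have "\<dots> = real (NN k n m) * (?W - ?a) + real (NN k n (m - 1)) * ?b"
    unfolding NN_def by (simp add: sum.distrib sum_distrib_left mult.commute)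
  finally show ?thesis using last by simp
qed


definition Gg :: "nat \<Rightarrow> nat \<Rightarrow> real" where
  "Gg k n = (real n - real k / (real k + 1)) gchoose n"
definition Bt :: "nat \<Rightarrow> nat \<Rightarrow> nat \<Rightarrow> real" where
  "Bt k n l = ((real n - real l - 2 + 2 / (real k + 1)) gchoose n) / Gg k n"
definition Q :: "nat \<Rightarrow> nat \<Rightarrow> nat \<Rightarrow> real" where
  "Q k n l = ((1 + (real k + 1) * real n) - Bt k n l) / ((real k + 1) * (real l + 1) + real k)"
definition Cc :: "nat \<Rightarrow> nat \<Rightarrow> real" where
  "Cc k m = (real m - 1 - 1 / (real k + 1)) gchoose (m - 1)"
definition FF :: "nat \<Rightarrow> nat \<Rightarrow> nat \<Rightarrow> real" where
  "FF k n m = Cc k m * (\<Sum>l=0..m-1. real ((m-1) choose l) * (-1)^l * Q k n l)"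

lemma gchoose_Suc: "((x::real) + 1) gchoose (Suc n) = (x gchoose n) * (x + 1) / (real n + 1)"
proof -
  have "real (Suc n) * ((x + 1) gchoose Suc n) = (x + 1) * ((x + 1 - 1) gchoose n)"
    by (rule gbinomial_absorption)
  thus ?thesis by (simp add: field_simps)
qed

lemma Gg_Suc: "Gg k (Suc n) = Gg k n * (real n + 1 / (real k + 1)) / (real n + 1)"
proof -
  have "Gg k (Suc n) = ((real n - real k / (real k + 1)) + 1) gchoose (Suc n)"
    unfolding Gg_def by (simp add: algebra_simps)
  also have "\<dots> = Gg k n * ((real n - real k / (real k + 1)) + 1) / (real n + 1)"
    unfolding gchoose_Suc Gg_def by simp
  also have "(real n - real k / (real k + 1)) + 1 = real n + 1 / (real k + 1)"
    by (simp add: field_simps)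
  finally show ?thesis .
qed

lemma Gg_pos: "Gg k n > 0"
proof (induction n)
  case 0 thus ?case by (simp add: Gg_def)
next
  case (Suc n)
  have "real n + 1 / (real k + 1) > 0" by (simp add: add_nonneg_pos)
  thus ?case using Suc by (simp add: Gg_Suc)
qed

lemma A_eq: "(real n + 1 / (real k + 1)) gchoose n = (1 + (real k + 1) * real n) * Gg k n"
proof (induction n)
  case 0 thus ?case by (simp add: Gg_def)
next
  case (Suc n)
  have "(real (Suc n) + 1 / (real k + 1)) gchoose (Suc n) = ((real n + 1 / (real k + 1)) + 1) gchoose (Suc n)"
    by (simp add: algebra_simps)
  also have "\<dots> = ((real n + 1 / (real k + 1)) gchoose n) * ((real n + 1 / (real k + 1)) + 1) / (real n + 1)"
    by (rule gchoose_Suc)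
  also have "\<dots> = (1 + (real k + 1) * real n) * Gg k n * ((real n + 1 / (real k + 1)) + 1) / (real n + 1)"
    using Suc by simp
  also have "\<dots> = (1 + (real k + 1) * real (Suc n)) * Gg k (Suc n)"
    unfolding Gg_Suc by (simp add: field_simps)
  finally show ?case .
qed

lemma Bt_0: "Bt k 0 l = 1"
  by (simp add: Bt_def Gg_def)

lemma Bt_Suc: "Bt k (Suc n) l * (1 + (real k + 1) * real n) = Bt k n l * ((real k + 1) * (real n - real l - 1) + 2)"
proof -
  define x where "x = real n - real l - 2 + 2 / (real k + 1)"
  define X where "X = x gchoose n"
  define G where "G = Gg k n"
  define a where "a = real k + 1"
  have a: "a > 0" "real k = a - 1" unfolding a_def by auto
  have "(real (Suc n) - real l - 2 + 2 / (real k + 1)) gchoose (Suc n) = (x + 1) gchoose (Suc n)"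
    unfolding x_def by (simp add: algebra_simps)
  also have "\<dots> = X * (x + 1) / (real n + 1)" unfolding X_def by (rule gchoose_Suc)
  finally have B: "(real (Suc n) - real l - 2 + 2 / (real k + 1)) gchoose (Suc n) = X * (x + 1) / (real n + 1)" .
  have G: "G > 0" unfolding G_def by (rule Gg_pos)
  have p: "real n + 1 / a > 0" using a by (simp add: add_nonneg_pos)
  have e1: "Bt k (Suc n) l = (X * (x + 1) / (real n + 1)) / (G * (real n + 1 / a) / (real n + 1))"
    unfolding Bt_def B Gg_Suc G_def a_def by simp
  have e2: "Bt k n l = X / G" unfolding Bt_def X_def x_def G_def by simp
  have e3: "a * (x + 1) = a * (real n - real l - 1) + 2" unfolding x_def using a by (simp add: field_simps)
  have n1: "real n + 1 \<noteq> 0" by linarith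
  define N where "N = real n + 1 / a"
  have N: "N > 0" "1 + a * real n = a * N" unfolding N_def using p a by (auto simp: field_simps)
  define M where "M = real n + 1"
  have M: "M > 0" unfolding M_def by linarith
  have "Bt k (Suc n) l * (1 + a * real n) = (X * (x + 1) / M) / (G * N / M) * (a * N)"
    unfolding e1 N(2) N_def M_def by simp
  also have "\<dots> = X / G * (a * (x + 1))"
    using G N(1) M by (simp add: field_simps)
  finally have "Bt k (Suc n) l * (1 + a * real n) = X / G * (a * (x + 1))" .
  thus ?thesis unfolding e2 using e3 unfolding a_def by simp
qed

lemma Q_Suc: "Q k (Suc n) l * (1 + (real k + 1) * real n) =
   (1 + (real k + 1) * real n + (real k + 1)) * Q k n l + Bt k n l"
proof -
  let ?W = "1 + (real k + 1) * real n"
  let ?c = "(real k + 1) * (real l + 1) + real k"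
  have c: "?c > 0" by (simp add: add_pos_nonneg)
  have "Q k (Suc n) l * ?W = ((1 + (real k + 1) * real (Suc n)) * ?W - Bt k (Suc n) l * ?W) / ?c"
    unfolding Q_def by (simp add: field_simps)
  also have "\<dots> = ((1 + (real k + 1) * real (Suc n)) * ?W - Bt k n l * ((real k + 1) * (real n - real l - 1) + 2)) / ?c"
    using Bt_Suc by simp
  also have "\<dots> = (?W + (real k + 1)) * Q k n l + Bt k n l"
    unfolding Q_def using c by (simp add: field_simps)
  finally show ?thesis .
qed

lemma Q_0: "Q k 0 l = 0"
  by (simp add: Q_def Bt_0)

lemma FF_0: "FF k 0 m = 0"
  by (simp add: FF_def Q_0)

lemma Cc_step: "m \<ge> 2 \<Longrightarrow> (real k + 1) * real (m - 1) * Cc k m = Cc k (m - 1) * ((real k + 1) * real (m - 1) - 1)"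
proof -
  assume m: "m \<ge> 2"
  obtain j where j: "m = Suc (Suc j)" using m by (metis add_2_eq_Suc le_Suc_ex)
  have "real (Suc j) * ((real (Suc j) - 1 / (real k + 1)) gchoose Suc j) = (real (Suc j) - 1 / (real k + 1)) * ((real (Suc j) - 1 / (real k + 1) - 1) gchoose j)"
    by (rule gbinomial_absorption)
  moreover have "Cc k m = (real (Suc j) - 1 / (real k + 1)) gchoose Suc j" unfolding Cc_def j by (simp add: algebra_simps)
  moreover have "Cc k (m - 1) = (real (Suc j) - 1 / (real k + 1) - 1) gchoose j" unfolding Cc_def j by (simp add: algebra_simps)
  moreover have "(real k + 1) * (real (Suc j) - 1 / (real k + 1)) = (real k + 1) * real (Suc j) - 1"
    by (simp add: field_simps)
  ultimately show ?thesis unfolding j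
    by (metis (no_types, lifting) diff_Suc_1 mult.assoc mult.commute)
qed


lemma Q_key:
  "(1 + (real k + 1) * real n + (real k + 1)) * Q k n l + Bt k n l =
   (1 + (real k + 1) * real n - ((real k + 1) * real m - 1)) * Q k n l
   + (1 + (real k + 1) * real n) + (real k + 1) * (real m - 1 - real l) * Q k n l"
proof -
  let ?c = "(real k + 1) * (real l + 1) + real k"
  have c: "?c > 0" by (simp add: add_pos_nonneg)
  have cq: "?c * Q k n l = (1 + (real k + 1) * real n) - Bt k n l"
    unfolding Q_def using c by simp
  show ?thesis using cq by (simp add: algebra_simps)
qed

lemma alt_sum: "(\<Sum>l=0..j. real (j choose l) * (-1)^l) = (if j = 0 then 1 else 0)"
proof (cases "j = 0")
  case True thus ?thesis by simp
next
  case False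
  have "(\<Sum>l\<le>j. (-1)^l * of_nat (j choose l)) = (0::real)" using False by (intro choose_alternating_sum) simp
  thus ?thesis using False by (simp add: atLeast0AtMost mult.commute)
qed

lemma absorb_sum:
  assumes m: "m \<ge> 2"
  shows "(\<Sum>l=0..m-1. real ((m-1) choose l) * (-1)^l * ((real m - 1 - real l) * g l)) =
         real (m - 1) * (\<Sum>l=0..m-2. real ((m-2) choose l) * (-1)^l * g l)"
proof -
  have "(\<Sum>l=0..m-1. real ((m-1) choose l) * (-1)^l * ((real m - 1 - real l) * g l)) =
        (\<Sum>l=0..m-1. real (m - 1) * (real ((m-2) choose l) * (-1)^l * g l))"
  proof (rule sum.cong[OF refl])
    fix l assume l: "l \<in> {0..m-1}"
    have "(m - 1 - l) * ((m-1) choose l) = (m - 1) * ((m - 1 - 1) choose l)" by (rule binomial_absorb_comp)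
    hence P: "real (m - 1 - l) * real ((m-1) choose l) = real (m - 1) * real ((m - 2) choose l)"
      by (metis diff_diff_left of_nat_mult one_add_one)
    have R: "real (m - 1 - l) = real m - 1 - real l" using l m by auto
    have E: "(real m - 1 - real l) * real ((m-1) choose l) = real (m - 1) * real ((m - 2) choose l)"
      using P unfolding R .
    define X where "X = real ((m-1) choose l)"
    define Y where "Y = real ((m-2) choose l)"
    define Z where "Z = real m - 1 - real l"
    have E': "Z * X = real (m - 1) * Y" using E unfolding X_def Y_def Z_def .
    have "X * (-1)^l * (Z * g l) = (Z * X) * ((-1)^l * g l)" by (simp add: algebra_simps)
    also have "\<dots> = real (m - 1) * (Y * (-1)^l * g l)" unfolding E' by (simp add: algebra_simps)
    finally show "real ((m-1) choose l) * (-1)^l * ((real m - 1 - real l) * g l) = real (m - 1) * (real ((m-2) choose l) * (-1)^l * g l)"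
      unfolding X_def Y_def Z_def .
  qed
  also have "\<dots> = real (m - 1) * (\<Sum>l=0..m-1. real ((m-2) choose l) * (-1)^l * g l)"
    by (simp add: sum_distrib_left)
  also have "(\<Sum>l=0..m-1. real ((m-2) choose l) * (-1)^l * g l) = (\<Sum>l=0..m-2. real ((m-2) choose l) * (-1)^l * g l)"
  proof -
    have "{0..m-1} = insert (m-1) {0..m-2}" using m by auto
    moreover have "m - 1 \<notin> {0..m-2}" using m by auto
    ultimately show ?thesis using m by simp
  qed
  finally show ?thesis .
qed

lemma FF_Suc:
  assumes m: "m \<ge> 1"
  shows "FF k (Suc n) m * (1 + (real k + 1) * real n) =
     FF k n m * (1 + (real k + 1) * real n - ((real k + 1) * real m - 1))
   + (if m \<ge> 2 then FF k n (m - 1) * ((real k + 1) * real (m - 1) - 1) else 0)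
   + (if m = 1 then 1 + (real k + 1) * real n else 0)"
proof -
  let ?W = "1 + (real k + 1) * real n"
  let ?V = "?W - ((real k + 1) * real m - 1)"
  let ?a = "real k + 1"
  let ?b = "\<lambda>l. real ((m-1) choose l) * (-1)^l"
  have "(\<Sum>l=0..m-1. ?b l * Q k (Suc n) l) * ?W = (\<Sum>l=0..m-1. ?b l * (Q k (Suc n) l * ?W))"
    by (simp add: sum_distrib_right mult.assoc)
  hence "FF k (Suc n) m * ?W = Cc k m * (\<Sum>l=0..m-1. ?b l * (Q k (Suc n) l * ?W))"
    unfolding FF_def by (simp only: mult.assoc)
  also have "\<dots> = Cc k m * (\<Sum>l=0..m-1. ?b l * (?V * Q k n l) + ?b l * ?W + ?a * (?b l * ((real m - 1 - real l) * Q k n l)))"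
  proof (intro arg_cong[where f="\<lambda>x. Cc k m * x"] sum.cong refl)
    fix l
    have "Q k (Suc n) l * ?W = (?W + ?a) * Q k n l + Bt k n l" by (rule Q_Suc)
    also have "\<dots> = ?V * Q k n l + ?W + ?a * (real m - 1 - real l) * Q k n l" by (rule Q_key)
    finally have E: "Q k (Suc n) l * ?W = ?V * Q k n l + ?W + ?a * (real m - 1 - real l) * Q k n l" .
    show "?b l * (Q k (Suc n) l * ?W) = ?b l * (?V * Q k n l) + ?b l * ?W + ?a * (?b l * ((real m - 1 - real l) * Q k n l))"
      unfolding E by (simp add: algebra_simps)
  qed
  also have "\<dots> = FF k n m * ?V + Cc k m * ?W * (\<Sum>l=0..m-1. ?b l)
      + ?a * Cc k m * (\<Sum>l=0..m-1. ?b l * ((real m - 1 - real l) * Q k n l))"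
  proof -
    define S1 where "S1 = (\<Sum>l=0..m-1. ?b l * Q k n l)"
    define S2 where "S2 = (\<Sum>l=0..m-1. ?b l)"
    define S3 where "S3 = (\<Sum>l=0..m-1. ?b l * ((real m - 1 - real l) * Q k n l))"
    have "(\<Sum>l=0..m-1. ?b l * (?V * Q k n l) + ?b l * ?W + ?a * (?b l * ((real m - 1 - real l) * Q k n l)))
       = (\<Sum>l=0..m-1. ?b l * (?V * Q k n l)) + (\<Sum>l=0..m-1. ?b l * ?W) + (\<Sum>l=0..m-1. ?a * (?b l * ((real m - 1 - real l) * Q k n l)))"
      by (simp only: sum.distrib)
    also have "(\<Sum>l=0..m-1. ?b l * (?V * Q k n l)) = ?V * S1" unfolding S1_def
      by (simp add: sum_distrib_left mult_ac)
    also have "(\<Sum>l=0..m-1. ?b l * ?W) = ?W * S2" unfolding S2_def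
      by (simp add: sum_distrib_left mult_ac)
    also have "(\<Sum>l=0..m-1. ?a * (?b l * ((real m - 1 - real l) * Q k n l))) = ?a * S3" unfolding S3_def
      by (simp add: sum_distrib_left)
    finally have E: "(\<Sum>l=0..m-1. ?b l * (?V * Q k n l) + ?b l * ?W + ?a * (?b l * ((real m - 1 - real l) * Q k n l)))
       = ?V * S1 + ?W * S2 + ?a * S3" .
    have F: "FF k n m = Cc k m * S1" unfolding FF_def S1_def by (simp add: mult.assoc)
    show ?thesis unfolding E F S2_def[symmetric] S3_def[symmetric] by (simp add: algebra_simps)
  qed
  also have "Cc k m * ?W * (\<Sum>l=0..m-1. ?b l) = (if m = 1 then ?W else 0)"
    using alt_sum[of "m-1"] m by (auto simp: Cc_def)
  also have "?a * Cc k m * (\<Sum>l=0..m-1. ?b l * ((real m - 1 - real l) * Q k n l)) =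
      (if m \<ge> 2 then FF k n (m - 1) * ((real k + 1) * real (m - 1) - 1) else 0)"
  proof (cases "m \<ge> 2")
    case True
    have "?a * Cc k m * (\<Sum>l=0..m-1. ?b l * ((real m - 1 - real l) * Q k n l)) =
          (?a * real (m - 1) * Cc k m) * (\<Sum>l=0..m-2. real ((m-2) choose l) * (-1)^l * Q k n l)"
      using absorb_sum[OF True, of "Q k n"] by simp
    also have "\<dots> = FF k n (m - 1) * ((real k + 1) * real (m - 1) - 1)"
      unfolding Cc_step[OF True] FF_def using True
      by (simp add: algebra_simps numeral_2_eq_2)
    finally show ?thesis using True by simp
  next
    case False
    hence "m = 1" using m by simp
    thus ?thesis by simp
  qed
  finally show ?thesis by simp
qed


lemma card_oktrees_pos: "card (oktrees k n) > 0"
proof (induction n)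
  case 0 thus ?case by simp
next
  case (Suc n) thus ?case using card_oktrees_Suc[of k n] by (simp del: oktrees.simps)
qed

lemma NN_FF: "m \<ge> 1 \<Longrightarrow> real (NN k n m) = FF k n m * real (card (oktrees k n))"
proof (induction n arbitrary: m)
  case 0
  thus ?case by (simp add: NN_def FF_0)
next
  case (Suc n)
  let ?W = "1 + (real k + 1) * real n"
  let ?T = "real (card (oktrees k n))"
  have T: "real (card (oktrees k (Suc n))) = ?T * ?W"
    using card_oktrees_Suc[of k n] by (simp del: oktrees.simps add: algebra_simps)
  have prev: "real (NN k n (m - 1)) = (if m \<ge> 2 then FF k n (m - 1) * ?T else 0)"
  proof (cases "m \<ge> 2")
    case True thus ?thesis using Suc.IH[of "m-1"] by simp
  next
    case False hence "m - 1 = 0" by simp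
    thus ?thesis using False NN_0 by simp
  qed
  have "real (NN k (Suc n) m) = real (NN k n m) * (?W - ((real k + 1) * real m - 1))
   + real (NN k n (m - 1)) * ((real k + 1) * real (m - 1) - 1)
   + (if m = 1 then ?T * ?W else 0)"
    using NN_rec[OF Suc.prems] by simp
  also have "\<dots> = ?T * (FF k n m * (?W - ((real k + 1) * real m - 1))
   + (if m \<ge> 2 then FF k n (m - 1) * ((real k + 1) * real (m - 1) - 1) else 0)
   + (if m = 1 then ?W else 0))"
    unfolding prev Suc.IH[OF Suc.prems] by (simp add: algebra_simps)
  also have "\<dots> = ?T * (FF k (Suc n) m * ?W)" unfolding FF_Suc[OF Suc.prems] ..
  finally show ?case unfolding T by (simp add: algebra_simps)
qed

lemma pmf_Xbar_NN:
  assumes n: "n \<ge> 1"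
  shows "pmf (Xbar k n) m = real (NN k n m) / (real n * real (card (oktrees k n)))"
proof -
  let ?S = "oktrees k n \<times> {1..n}"
  let ?f = "\<lambda>(t, u). num_desc t u"
  have fin: "finite ?S" using finite_oktrees by simp
  have ne: "?S \<noteq> {}" using card_oktrees_pos[of k n] n by (auto simp: card_gt_0_iff)
  have "pmf (Xbar k n) m = measure (measure_pmf (pmf_of_set ?S)) (?f -` {m})"
    unfolding Xbar_def pmf_map ..
  also have "\<dots> = real (card (?S \<inter> ?f -` {m})) / real (card ?S)"
    using measure_pmf_of_set[OF ne fin] by simp
  also have "?S \<inter> ?f -` {m} = (\<lambda>(u,t). (t,u)) ` (SIGMA u:{1..n}. {t\<in>oktrees k n. num_desc t u = m})"
    by (auto simp: image_def)
  also have "card \<dots> = card (SIGMA u:{1..n}. {t\<in>oktrees k n. num_desc t u = m})"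
    by (rule card_image) (auto simp: inj_on_def)
  also have "\<dots> = NN k n m" unfolding NN_def using finite_oktrees by (intro card_SigmaI) auto
  also have "card ?S = card (oktrees k n) * n" by (simp add: card_cartesian_product)
  finally show ?thesis by (simp add: mult.commute)
qed

lemma pmf_Xbar_FF:
  assumes n: "n \<ge> 1" and m: "m \<ge> 1"
  shows "pmf (Xbar k n) m = FF k n m / real n"
  unfolding pmf_Xbar_NN[OF n] NN_FF[OF m] using card_oktrees_pos[of k n] by simp

lemma FF_formula:
  assumes n: "n \<ge> 1"
  shows "FF k n m / real n =
             ((real m - 1 - 1 / (real k + 1)) gchoose (m - 1))
               / (real n * ((real n - real k / (real k + 1)) gchoose n))
             * (\<Sum>l = 0..m - 1. real ((m - 1) choose l) * (-1) ^ l
                   / ((real k + 1) * (real l + 1) + real k)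
                   * (((real n + 1 / (real k + 1)) gchoose n)
                      - ((real n - real l - 2 + 2 / (real k + 1)) gchoose n)))"
proof -
  have G: "Gg k n > 0" by (rule Gg_pos)
  have trm: "real ((m - 1) choose l) * (-1) ^ l
                   / ((real k + 1) * (real l + 1) + real k)
                   * (((real n + 1 / (real k + 1)) gchoose n)
                      - ((real n - real l - 2 + 2 / (real k + 1)) gchoose n))
       = Gg k n * (real ((m-1) choose l) * (-1)^l * Q k n l)" for l
  proof -
    have B: "(real n - real l - 2 + 2 / (real k + 1)) gchoose n = Bt k n l * Gg k n"
      unfolding Bt_def using G by simp
    show ?thesis unfolding B A_eq Q_def by (simp add: algebra_simps)
  qed
  show ?thesis unfolding trm sum_distrib_left[symmetric] FF_def Cc_def[symmetric] Gg_def[symmetric]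
    using G n by (simp add: field_simps)
qed


lemma pascal_sum:
  fixes g :: "nat \<Rightarrow> real"
  shows "(\<Sum>l\<le>Suc j. real (Suc j choose l) * g l) = (\<Sum>l\<le>j. real (j choose l) * g l) + (\<Sum>l\<le>j. real (j choose l) * g (Suc l))"
proof -
  have 1: "(\<Sum>l\<le>Suc j. real (Suc j choose l) * g l) = g 0 + (\<Sum>l\<le>j. real (Suc j choose Suc l) * g (Suc l))"
    by (subst sum.atMost_Suc_shift) simp
  have 2: "(\<Sum>l\<le>j. real (Suc j choose Suc l) * g (Suc l)) = (\<Sum>l\<le>j. real (j choose Suc l) * g (Suc l)) + (\<Sum>l\<le>j. real (j choose l) * g (Suc l))"
    by (simp add: sum.distrib algebra_simps)
  have 3: "g 0 + (\<Sum>l\<le>j. real (j choose Suc l) * g (Suc l)) = (\<Sum>l\<le>Suc j. real (j choose l) * g l)"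
    by (subst sum.atMost_Suc_shift) simp
  have 4: "(\<Sum>l\<le>Suc j. real (j choose l) * g l) = (\<Sum>l\<le>j. real (j choose l) * g l)" by simp
  show ?thesis unfolding 1 2 using 3 4 by simp
qed

lemma beta_sum:
  fixes c :: real
  assumes "c > 0"
  shows "(\<Sum>l\<le>j. real (j choose l) * ((-1)^l / (real l + c))) = fact j / pochhammer c (Suc j)"
  using assms
proof (induction j arbitrary: c)
  case 0 thus ?case by simp
next
  case (Suc j)
  have c1: "c + 1 > 0" using Suc.prems by simp
  have "(\<Sum>l\<le>Suc j. real (Suc j choose l) * ((-1)^l / (real l + c))) =
        (\<Sum>l\<le>j. real (j choose l) * ((-1)^l / (real l + c))) + (\<Sum>l\<le>j. real (j choose l) * ((-1)^(Suc l) / (real (Suc l) + c)))"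
    by (rule pascal_sum)
  also have "(\<Sum>l\<le>j. real (j choose l) * ((-1)^(Suc l) / (real (Suc l) + c))) = - (\<Sum>l\<le>j. real (j choose l) * ((-1)^l / (real l + (c + 1))))"
    by (simp add: sum_negf[symmetric] algebra_simps)
  also have "(\<Sum>l\<le>j. real (j choose l) * ((-1)^l / (real l + c))) = fact j / pochhammer c (Suc j)"
    using Suc.IH Suc.prems by blast
  also have "(\<Sum>l\<le>j. real (j choose l) * ((-1)^l / (real l + (c + 1)))) = fact j / pochhammer (c + 1) (Suc j)"
    using Suc.IH c1 by blast
  also have "fact j / pochhammer c (Suc j) + - (fact j / pochhammer (c + 1) (Suc j)) = fact (Suc j) / pochhammer c (Suc (Suc j))"
  proof -
    define P where "P = pochhammer (c + 1) j"
    have P: "P > 0" unfolding P_def using c1 by (rule pochhammer_pos)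
    have e1: "pochhammer c (Suc j) = c * P" unfolding P_def by (rule pochhammer_rec)
    have e2: "pochhammer (c + 1) (Suc j) = (c + 1 + real j) * P" unfolding P_def by (rule pochhammer_rec')
    have e3: "pochhammer c (Suc (Suc j)) = c * ((c + 1 + real j) * P)"
      unfolding pochhammer_rec[of c "Suc j"] e2 ..
    define F where "F = (fact j :: real)"
    have F: "F > 0" unfolding F_def by simp
    have fs: "fact (Suc j) = (real j + 1) * F" unfolding F_def by simp
    define D where "D = c + 1 + real j"
    have D: "D > 0" unfolding D_def using c1 by simp
    have "F / (c * P) + - (F / (D * P)) = F * (D - c) / (c * (D * P))"
      using P Suc.prems D by (simp add: field_simps)
    moreover have "D - c = real j + 1" unfolding D_def by simp
    ultimately have "F / (c * P) + - (F / (D * P)) = (real j + 1) * F / (c * (D * P))" by (simp add: mult.commute)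
    thus ?thesis unfolding e1 e2 e3 fs D_def F_def .
  qed
  finally show ?case .
qed

lemma limit_value:
  assumes k: "k \<ge> 1" and m: "m \<ge> 1"
  shows "Cc k m * (\<Sum>l=0..m-1. real ((m-1) choose l) * (-1)^l * ((real k + 1) / ((real k + 1) * (real l + 1) + real k)))
       = real k / ((real k + 1) * (real m + real k / (real k + 1)) * (real m - 1 / (real k + 1)))"
proof -
  define a where "a = real k + 1"
  have a: "a \<ge> 2" "real k = a - 1" unfolding a_def using k by auto
  define j where "j = m - 1"
  have mj: "m = Suc j" unfolding j_def using m by simp
  define c where "c = 2 - 1 / a"
  have c: "c > 0" unfolding c_def using a by (simp add: field_simps)
  have t: "(real k + 1) / ((real k + 1) * (real l + 1) + real k) = 1 / (real l + c)" for l
    unfolding c_def a_def[symmetric] a(2) using a by (simp add: field_simps)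
  have S: "(\<Sum>l=0..m-1. real ((m-1) choose l) * (-1)^l * ((real k + 1) / ((real k + 1) * (real l + 1) + real k)))
     = fact j / pochhammer c (Suc j)"
    unfolding t j_def[symmetric] using beta_sum[OF c, of j] by (simp add: atLeast0AtMost algebra_simps)
  define d where "d = 1 - 1 / a"
  have d: "d > 0" "c = d + 1" unfolding d_def c_def using a by (auto simp: field_simps)
  have C: "Cc k m = pochhammer d j / fact j"
    unfolding Cc_def gbinomial_pochhammer' mj d_def a_def by (simp add: algebra_simps)
  define P where "P = pochhammer c j"
  have P: "P > 0" unfolding P_def using c by (rule pochhammer_pos)
  have e1: "pochhammer d (Suc j) = d * P" unfolding P_def d(2) by (rule pochhammer_rec)
  have e2: "pochhammer d (Suc j) = (d + real j) * pochhammer d j" by (rule pochhammer_rec')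
  have e3: "pochhammer c (Suc j) = (c + real j) * P" unfolding P_def by (rule pochhammer_rec')
  have dj: "d + real j > 0" using d by simp
  have pd: "pochhammer d j = d * P / (d + real j)" using e1 e2 dj by (simp add: field_simps)
  have cj: "c + real j > 0" using c by simp
  have "Cc k m * (fact j / pochhammer c (Suc j)) = (d * P / (d + real j) / fact j) * (fact j / ((c + real j) * P))"
    unfolding C pd e3 ..
  also have "\<dots> = d / ((d + real j) * (c + real j))"
  proof -
    define F where "F = (fact j :: real)"
    have F: "F > 0" unfolding F_def by simp
    define D1 where "D1 = d + real j"
    define D2 where "D2 = c + real j"
    have D1: "D1 > 0" "D2 > 0" unfolding D1_def D2_def using dj cj by auto
    have "(d * P / D1 / F) * (F / (D2 * P)) = d / (D1 * D2)"
      using F P D1 by (simp add: field_simps)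
    thus ?thesis unfolding F_def D1_def D2_def .
  qed
  also have "\<dots> = real k / ((real k + 1) * (real m + real k / (real k + 1)) * (real m - 1 / (real k + 1)))"
    unfolding a_def[symmetric] a(2) d_def c_def mj using a by (simp add: field_simps)
  finally show ?thesis unfolding S .
qed


lemma Bt_step_le:
  assumes n: "n \<ge> Suc l"
  shows "\<bar>Bt k (Suc n) l\<bar> \<le> \<bar>Bt k n l\<bar>"
proof -
  define a where "a = real k + 1"
  have a: "a \<ge> 1" unfolding a_def by simp
  define W where "W = 1 + a * real n"
  define r where "r = a * (real n - real l - 1) + 2"
  have W: "W > 0" unfolding W_def using a by (simp add: add_pos_nonneg)
  have "real n - real l - 1 \<ge> 0" using n by simp
  hence r0: "r \<ge> 0" unfolding r_def using a by simp
  have al: "1 * 1 \<le> a * (real l + 1)" using a by (intro mult_mono) auto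
  have "r = W + 1 - a * (real l + 1)" unfolding r_def W_def by (simp add: algebra_simps)
  hence rW: "r \<le> W" using al by linarith
  have e: "Bt k (Suc n) l * W = Bt k n l * r" using Bt_Suc[of k n l] unfolding W_def r_def a_def .
  have "\<bar>Bt k (Suc n) l\<bar> * W = \<bar>Bt k (Suc n) l * W\<bar>" using W by (simp add: abs_mult)
  also have "\<dots> = \<bar>Bt k n l * r\<bar>" unfolding e ..
  also have "\<dots> = \<bar>Bt k n l\<bar> * r" using r0 by (simp add: abs_mult)
  also have "\<dots> \<le> \<bar>Bt k n l\<bar> * W" using rW by (simp add: mult_left_mono)
  finally show ?thesis using W by simp
qed

lemma Bt_bounded: "\<exists>M. \<forall>n. \<bar>Bt k n l\<bar> \<le> M"
proof -
  define M where "M = Max ((\<lambda>j. \<bar>Bt k j l\<bar>) ` {..Suc l})"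
  have "\<bar>Bt k n l\<bar> \<le> M" for n
  proof (induction n)
    case 0 thus ?case unfolding M_def by (intro Max_ge) auto
  next
    case (Suc n)
    show ?case
    proof (cases "Suc n \<le> Suc l")
      case True thus ?thesis unfolding M_def by (intro Max_ge) auto
    next
      case False
      hence "n \<ge> Suc l" by simp
      thus ?thesis using Bt_step_le[of l n k] Suc.IH by linarith
    qed
  qed
  thus ?thesis by blast
qed

lemma Bt_over_n: "(\<lambda>n. Bt k n l / real n) \<longlonglongrightarrow> 0"
proof -
  obtain M where M: "\<And>n. \<bar>Bt k n l\<bar> \<le> M" using Bt_bounded by blast
  show ?thesis
  proof (rule Lim_null_comparison)
    show "\<forall>\<^sub>F n in sequentially. norm (Bt k n l / real n) \<le> M / real n"
      using M by (auto simp: divide_right_mono abs_divide)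
    show "(\<lambda>n. M / real n) \<longlonglongrightarrow> 0" by (rule lim_const_over_n)
  qed
qed

lemma W_over_n: "(\<lambda>n. (1 + (real k + 1) * real n) / real n) \<longlonglongrightarrow> real k + 1"
proof -
  have "(\<lambda>n. (real k + 1) + 1 / real n) \<longlonglongrightarrow> (real k + 1) + 0"
    by (intro tendsto_add tendsto_const lim_const_over_n)
  moreover have "\<forall>\<^sub>F n in sequentially. (real k + 1) + 1 / real n = (1 + (real k + 1) * real n) / real n"
    using eventually_ge_at_top[of 1] by eventually_elim (simp add: field_simps)
  ultimately have "(\<lambda>n. (1 + (real k + 1) * real n) / real n) \<longlonglongrightarrow> (real k + 1) + 0"
    by (rule Lim_transform_eventually)
  thus ?thesis by simp
qed

lemma Q_over_n: "(\<lambda>n. Q k n l / real n) \<longlonglongrightarrow> (real k + 1) / ((real k + 1) * (real l + 1) + real k)"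
proof -
  let ?c = "(real k + 1) * (real l + 1) + real k"
  have "(\<lambda>n. ((1 + (real k + 1) * real n) / real n - Bt k n l / real n) / ?c) \<longlonglongrightarrow> ((real k + 1) - 0) / ?c"
  proof (intro tendsto_divide tendsto_diff W_over_n Bt_over_n tendsto_const)
    have "?c > 0" by (simp add: add_pos_nonneg)
    thus "?c \<noteq> 0" by simp
  qed
  moreover have "Q k n l / real n = ((1 + (real k + 1) * real n) / real n - Bt k n l / real n) / ?c" for n
    unfolding Q_def by (simp add: diff_divide_distrib mult.commute)
  ultimately show ?thesis by simp
qed

lemma pmf_Xbar_lim:
  assumes k: "k \<ge> 1" and m: "m \<ge> 1"
  shows "(\<lambda>n. pmf (Xbar k n) m) \<longlonglongrightarrow> real k / ((real k + 1) * (real m + real k / (real k + 1)) * (real m - 1 / (real k + 1)))"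
proof -
  have "(\<lambda>n. Cc k m * (\<Sum>l=0..m-1. real ((m-1) choose l) * (-1)^l * (Q k n l / real n)))
      \<longlonglongrightarrow> Cc k m * (\<Sum>l=0..m-1. real ((m-1) choose l) * (-1)^l * ((real k + 1) / ((real k + 1) * (real l + 1) + real k)))"
    by (intro tendsto_mult tendsto_sum tendsto_const Q_over_n)
  moreover have "\<forall>\<^sub>F n in sequentially. Cc k m * (\<Sum>l=0..m-1. real ((m-1) choose l) * (-1)^l * (Q k n l / real n)) = pmf (Xbar k n) m"
    using eventually_ge_at_top[of 1]
  proof eventually_elim
    case (elim n)
    have "FF k n m / real n = Cc k m * (\<Sum>l=0..m-1. real ((m-1) choose l) * (-1)^l * (Q k n l / real n))"
    proof -
      have "(\<Sum>l=0..m-1. real ((m-1) choose l) * (-1)^l * (Q k n l / real n)) = (\<Sum>l=0..m-1. real ((m-1) choose l) * (-1)^l * Q k n l) / real n"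
        by (simp add: sum_divide_distrib)
      thus ?thesis unfolding FF_def by simp
    qed
    thus ?case using pmf_Xbar_FF[OF elim m] by simp
  qed
  ultimately have "(\<lambda>n. pmf (Xbar k n) m) \<longlonglongrightarrow> Cc k m * (\<Sum>l=0..m-1. real ((m-1) choose l) * (-1)^l * ((real k + 1) / ((real k + 1) * (real l + 1) + real k)))"
    by (rule Lim_transform_eventually)
  thus ?thesis by (simp only: limit_value[OF k m])
qed

lemma pmf_Xbar_0: "n \<ge> 1 \<Longrightarrow> pmf (Xbar k n) 0 = 0"
  using pmf_Xbar_NN[of n k 0] NN_0 by simp


definition plim :: "nat \<Rightarrow> nat \<Rightarrow> real" where
  "plim k m = (if m = 0 then 0 else real k /
               ((real k + 1) * (real m + real k / (real k + 1)) * (real m - 1 / (real k + 1))))"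

lemma plim_nonneg: "plim k m \<ge> 0"
proof (cases "m = 0")
  case True thus ?thesis by (simp add: plim_def)
next
  case False
  have "1 / (real k + 1) \<le> 1" by simp
  hence "real m - 1 / (real k + 1) \<ge> 0" using False by linarith
  moreover have "real m + real k / (real k + 1) \<ge> 0" by simp
  ultimately show ?thesis using False unfolding plim_def by simp
qed

lemma plim_sums:
  assumes k: "k \<ge> 1"
  shows "plim k sums 1"
proof -
  define a where "a = real k + 1"
  have a: "a \<ge> 2" "real k = a - 1" unfolding a_def using k by auto
  define d where "d = 1 - 1 / a"
  have d: "d > 0" unfolding d_def using a by (simp add: field_simps)
  define g where "g = (\<lambda>j::nat. inverse (real j + d))"
  have "(\<lambda>j. real j + d) \<longlonglongrightarrow> d \<Longrightarrow> True" by simp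
  have lim: "LIM j sequentially. d + real j :> at_top"
    by (rule filterlim_tendsto_add_at_top[OF tendsto_const filterlim_real_sequentially])
  have g0: "g \<longlonglongrightarrow> 0" unfolding g_def using tendsto_inverse_0_at_top[OF lim] by (simp add: add.commute)
  have "(\<lambda>j. g j - g (Suc j)) sums (g 0 - 0)" by (rule telescope_sums'[OF g0])
  hence "(\<lambda>j. (1 - 1 / a) * (g j - g (Suc j))) sums ((1 - 1 / a) * g 0)" using sums_mult by fastforce
  moreover have "(1 - 1 / a) * g 0 = 1"
  proof -
    have "(1 - 1 / a) * g 0 = d * inverse d" unfolding g_def d_def by simp
    also have "\<dots> = 1" using d by simp
    finally show ?thesis .
  qed
  moreover have "(1 - 1 / a) * (g j - g (Suc j)) = plim k (Suc j)" for j
  proof -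
    have p1: "real j + d > 0" using d by simp
    have p2: "real j + 1 + d > 0" using d by simp
    have "g j - g (Suc j) = 1 / ((real j + d) * (real j + 1 + d))"
      unfolding g_def using p1 p2 by (simp add: field_simps)
    moreover have "plim k (Suc j) = d / ((real j + d) * (real j + 1 + d))"
      unfolding plim_def a_def[symmetric] a(2) d_def using a by (simp add: field_simps)
    ultimately show ?thesis unfolding d_def by simp
  qed
  ultimately have "(\<lambda>j. plim k (Suc j)) sums 1" by simp
  thus ?thesis unfolding sums_Suc_iff by (simp add: plim_def)
qed

lemma plim_integral:
  assumes k: "k \<ge> 1"
  shows "(\<integral>\<^sup>+x. ennreal (plim k x) \<partial>count_space UNIV) = 1"
proof -
  have "(\<integral>\<^sup>+x. ennreal (plim k x) \<partial>count_space UNIV) = (\<Sum>x. ennreal (plim k x))"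
    by (rule nn_integral_count_space_nat)
  also have "\<dots> = ennreal (\<Sum>x. plim k x)"
    using plim_sums[OF k] plim_nonneg by (intro suminf_ennreal2) (auto simp: sums_summable)
  also have "(\<Sum>x. plim k x) = 1" using plim_sums[OF k] by (simp add: sums_iff)
  finally show ?thesis by simp
qed

lemma cdf_pmf:
  "cdf (distr (measure_pmf P) borel real) x = (\<Sum>m\<in>{m. real m \<le> x}. pmf P m)"
proof -
  have fin: "finite {m::nat. real m \<le> x}"
  proof (rule finite_subset)
    show "{m::nat. real m \<le> x} \<subseteq> {..nat \<lceil>x\<rceil>}"
    proof
      fix m assume "m \<in> {m::nat. real m \<le> x}"
      hence "real m \<le> x" by simp
      hence "real m \<le> real_of_int \<lceil>x\<rceil>" using le_of_int_ceiling order_trans by blast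
      hence "int m \<le> \<lceil>x\<rceil>" by linarith
      thus "m \<in> {..nat \<lceil>x\<rceil>}" by simp
    qed
  qed simp
  have "cdf (distr (measure_pmf P) borel real) x = measure (distr (measure_pmf P) borel real) {..x}"
    by (simp add: cdf_def)
  also have "\<dots> = measure (measure_pmf P) (real -` {..x} \<inter> space (measure_pmf P))"
    by (rule measure_distr) auto
  also have "real -` {..x} \<inter> space (measure_pmf P) = {m. real m \<le> x}" by auto
  also have "measure (measure_pmf P) {m. real m \<le> x} = (\<Sum>m\<in>{m. real m \<le> x}. pmf P m)"
    by (rule measure_measure_pmf_finite[OF fin])
  finally show ?thesis .
qed

lemma final_part2:
  assumes k: "k \<ge> 1"
  shows "\<exists>X :: nat pmf.
            (\<forall>m \<ge> 1. pmf X m = real k /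
               ((real k + 1) * (real m + real k / (real k + 1)) * (real m - 1 / (real k + 1))))
          \<and> weak_conv_m (\<lambda>n. distr (measure_pmf (Xbar k n)) borel real)
                        (distr (measure_pmf X) borel real)"
proof -
  define X where "X = embed_pmf (plim k)"
  have pX: "pmf X m = plim k m" for m
    unfolding X_def by (rule pmf_embed_pmf[OF plim_nonneg plim_integral[OF k]])
  have conv: "(\<lambda>n. pmf (Xbar k n) m) \<longlonglongrightarrow> pmf X m" for m
  proof (cases "m = 0")
    case True
    have "\<forall>\<^sub>F n in sequentially. 0 = pmf (Xbar k n) m"
      using eventually_ge_at_top[of 1] by eventually_elim (simp add: True pmf_Xbar_0)
    moreover have "pmf X m = 0" unfolding pX True plim_def by simp
    ultimately show ?thesis using Lim_transform_eventually[OF tendsto_const] by metis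
  next
    case False
    hence "pmf X m = real k / ((real k + 1) * (real m + real k / (real k + 1)) * (real m - 1 / (real k + 1)))"
      unfolding pX plim_def by simp
    thus ?thesis using pmf_Xbar_lim[OF k, of m] False by simp
  qed
  have wc: "weak_conv_m (\<lambda>n. distr (measure_pmf (Xbar k n)) borel real) (distr (measure_pmf X) borel real)"
    unfolding weak_conv_m_def weak_conv_def
  proof (intro allI impI)
    fix x
    show "(\<lambda>n. cdf (distr (measure_pmf (Xbar k n)) borel real) x) \<longlonglongrightarrow> cdf (distr (measure_pmf X) borel real) x"
      unfolding cdf_pmf by (intro tendsto_sum conv)
  qed
  show ?thesis
    by (rule exI[of _ X]) (use wc pX in \<open>auto simp: plim_def\<close>)
qed


theorem theorem6:
  fixes k :: nat
  assumes "k \<ge> 1"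
  shows "(\<forall>n m. n \<ge> 1 \<longrightarrow> m \<ge> 1 \<longrightarrow>
           pmf (Xbar k n) m =
             ((real m - 1 - 1 / (real k + 1)) gchoose (m - 1))
               / (real n * ((real n - real k / (real k + 1)) gchoose n))
             * (\<Sum>l = 0..m - 1. real ((m - 1) choose l) * (-1) ^ l
                   / ((real k + 1) * (real l + 1) + real k)
                   * (((real n + 1 / (real k + 1)) gchoose n)
                      - ((real n - real l - 2 + 2 / (real k + 1)) gchoose n))))
       \<and> (\<exists>X :: nat pmf.
            (\<forall>m \<ge> 1. pmf X m = real k /
               ((real k + 1) * (real m + real k / (real k + 1)) * (real m - 1 / (real k + 1))))
          \<and> weak_conv_m (\<lambda>n. distr (measure_pmf (Xbar k n)) borel real)
                        (distr (measure_pmf X) borel real))"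
  proof (intro conjI allI impI)
  fix n m :: nat assume n: "n \<ge> 1" and m: "m \<ge> 1"
  show "pmf (Xbar k n) m =
             ((real m - 1 - 1 / (real k + 1)) gchoose (m - 1))
               / (real n * ((real n - real k / (real k + 1)) gchoose n))
             * (\<Sum>l = 0..m - 1. real ((m - 1) choose l) * (-1) ^ l
                   / ((real k + 1) * (real l + 1) + real k)
                   * (((real n + 1 / (real k + 1)) gchoose n)
                      - ((real n - real l - 2 + 2 / (real k + 1)) gchoose n)))"
    using pmf_Xbar_FF[OF n m] FF_formula[OF n] by simp
next
  show "\<exists>X :: nat pmf.
            (\<forall>m \<ge> 1. pmf X m = real k /
               ((real k + 1) * (real m + real k / (real k + 1)) * (real m - 1 / (real k + 1))))
          \<and> weak_conv_m (\<lambda>n. distr (measure_pmf (Xbar k n)) borel real)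
                        (distr (measure_pmf X) borel real)"
    using final_part2[OF assms] .
qed

end
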